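(* Let $0<\gamma'<\gamma$ and $\varepsilon>0$. For any finite class $\mathcal{H}$ of hypotheses $\{-1,+1\}^d\to\{-1,+1\}$, there exists an $\varepsilon$-sample-$\nabla_0$DP algorithm that, given a finite set $S$ of labeled examples, outputs $h^{priv}\in\mathcal{H}$ such that $$\mathbb{E}[\mathcal{R}_{\gamma'}(h^{priv};S)]\le\inf_{h\in\mathcal{H}}\mathcal{R}_\gamma(h;S)+O\!\left(\frac{\log|\mathcal{H}|}{\varepsilon(\gamma-\gamma')d\cdot|S|}\right).$$
   Context: Labeled examples are $(x,y)\in\{-1,+1\}^d\times\{-1,+1\}$. For a hypothesis $h$ and distribution $\mathcal{D}$, $\mathcal{R}_\gamma(h,\mathcal{D})=\Pr_{(x,y)\sim\mathcal{D}}[\exists\check x\in\{-1,+1\}^d: h(\check x)\ne y\wedge\|\check x-x\|_0\le\gamma d]$ with $\|\cdot\|_0$ the Hamming distance; $\mathcal{R}_\gamma(h;S)$ is this quantity for $\mathcal{D}$ uniform on $S$. An algorithm $M$ on datasets of labeled examples is $\varepsilon$-sample-$\nabla_0$DP if $\Pr[M(S)\in E]\le e^\varepsilon\Pr[M(S')\in E]$ for all $E$ whenever $S,S'$ differ only in a single coordinate of the feature vector of a single example (labels unchanged). *)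

theory Defs
  imports "HOL-Probability.Probability"
begin

text \<open>Encoding: the sign values -1 and +1 are represented by False and True.
  A feature vector in the hypercube of dimension d is a bool list of length d;
  a labeled example is a pair (x, y); a dataset is a list of labeled examples
  (the empirical distribution is uniform over its entries).\<close>

type_synonym point = "bool list"
type_synonym example = "point \<times> bool"
type_synonym hypothesis = "point \<Rightarrow> bool"

definition cube :: "nat \<Rightarrow> point set" where
  "cube d = {x. length x = d}"

definition hamming :: "point \<Rightarrow> point \<Rightarrow> nat" where
  "hamming x y = card {i. i < length x \<and> x ! i \<noteq> y ! i}"

definition robust_err :: "real \<Rightarrow> nat \<Rightarrow> hypothesis \<Rightarrow> example \<Rightarrow> bool" where
  "robust_err \<gamma> d h e =
     (\<exists>x' \<in> cube d. h x' \<noteq> snd e \<and> real (hamming x' (fst e)) \<le> \<gamma> * real d)"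

definition emp_robust_risk :: "real \<Rightarrow> nat \<Rightarrow> hypothesis \<Rightarrow> example list \<Rightarrow> real" where
  "emp_robust_risk \<gamma> d h S =
     real (length (filter (robust_err \<gamma> d h) S)) / real (length S)"

definition valid_dataset :: "nat \<Rightarrow> example list \<Rightarrow> bool" where
  "valid_dataset d S = (\<forall>e \<in> set S. fst e \<in> cube d)"

definition sample_neighbors :: "nat \<Rightarrow> example list \<Rightarrow> example list \<Rightarrow> bool" where
  "sample_neighbors d S S' =
     (valid_dataset d S \<and> valid_dataset d S' \<and> length S = length S' \<and>
      (\<exists>i < length S. snd (S ! i) = snd (S' ! i) \<and>
          hamming (fst (S ! i)) (fst (S' ! i)) = 1 \<and>
          (\<forall>j < length S. j \<noteq> i \<longrightarrow> S ! j = S' ! j)))"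

definition sample_nabla0_DP ::
    "real \<Rightarrow> nat \<Rightarrow> (example list \<Rightarrow> hypothesis pmf) \<Rightarrow> bool" where
  "sample_nabla0_DP \<epsilon> d M =
     (\<forall>S S' E. sample_neighbors d S S' \<longrightarrow>
        measure_pmf.prob (M S) E \<le> exp \<epsilon> * measure_pmf.prob (M S') E)"

end

theory Submission
  imports Defs
begin

definition wpmf :: "'a set \<Rightarrow> ('a \<Rightarrow> real) \<Rightarrow> 'a pmf" where
  "wpmf H w = embed_pmf (\<lambda>h. if h \<in> H then w h / sum w H else 0)"

lemma pmf_wpmf:
  assumes "finite H" "H \<noteq> {}" "\<And>h. h \<in> H \<Longrightarrow> w h > 0"
  shows "pmf (wpmf H w) h = (if h \<in> H then w h / sum w H else 0)"
proof -
  have pos: "sum w H > 0" using assms by (simp add: sum_pos)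
  let ?f = "\<lambda>h. if h \<in> H then w h / sum w H else 0"
  have nn: "\<And>x. 0 \<le> ?f x" using assms pos by (auto intro: less_imp_le)
  have "(\<integral>\<^sup>+x. ennreal (?f x) \<partial>count_space UNIV) = (\<Sum>x\<in>H. ennreal (?f x))"
    by (rule nn_integral_count_space') (use assms in auto)
  also have "\<dots> = ennreal (\<Sum>x\<in>H. ?f x)"
    using assms pos by (intro sum_ennreal) (auto intro: less_imp_le)
  also have "(\<Sum>x\<in>H. ?f x) = (\<Sum>x\<in>H. w x / sum w H)" by simp
  also have "\<dots> = 1" using pos by (simp add: sum_divide_distrib[symmetric])
  finally have "(\<integral>\<^sup>+x. ennreal (?f x) \<partial>count_space UNIV) = 1" by simp
  then show ?thesis unfolding wpmf_def using nn by (subst pmf_embed_pmf) auto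
qed

lemma set_wpmf:
  assumes "finite H" "H \<noteq> {}" "\<And>h. h \<in> H \<Longrightarrow> w h > 0"
  shows "set_pmf (wpmf H w) \<subseteq> H"
  using pmf_wpmf[OF assms] by (auto simp: set_pmf_eq)

lemma prob_wpmf:
  assumes "finite H" "H \<noteq> {}" "\<And>h. h \<in> H \<Longrightarrow> w h > 0"
  shows "measure_pmf.prob (wpmf H w) E = (\<Sum>h\<in>E \<inter> H. w h / sum w H)"
proof -
  have "E \<inter> H \<inter> set_pmf (wpmf H w) = E \<inter> set_pmf (wpmf H w)" using set_wpmf[of H w, OF assms] by blast
  then have "measure_pmf.prob (wpmf H w) E = measure_pmf.prob (wpmf H w) (E \<inter> H)"
    by (metis measure_Int_set_pmf)
  also have "\<dots> = sum (pmf (wpmf H w)) (E \<inter> H)"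
    using assms by (simp add: measure_measure_pmf_finite)
  also have "\<dots> = (\<Sum>h\<in>E \<inter> H. w h / sum w H)"
    using pmf_wpmf[OF assms] by (intro sum.cong) auto
  finally show ?thesis .
qed

lemma dp_wpmf:
  assumes "finite H" "H \<noteq> {}" "\<And>h. h \<in> H \<Longrightarrow> w1 h > 0" "\<And>h. h \<in> H \<Longrightarrow> w2 h > 0"
    and le1: "\<And>h. h \<in> H \<Longrightarrow> w1 h \<le> exp a * w2 h"
    and le2: "\<And>h. h \<in> H \<Longrightarrow> w2 h \<le> exp a * w1 h"
  shows "measure_pmf.prob (wpmf H w1) E \<le> exp (2*a) * measure_pmf.prob (wpmf H w2) E"
proof -
  have p1: "sum w1 H > 0" using assms by (simp add: sum_pos)
  have p2: "sum w2 H > 0" using assms by (simp add: sum_pos)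
  have Z: "sum w2 H \<le> exp a * sum w1 H"
    using le2 by (subst sum_distrib_left) (rule sum_mono)
  have Z': "1 / sum w1 H \<le> exp a / sum w2 H"
    using Z p1 p2 by (simp add: field_simps)
  have "(\<Sum>h\<in>E \<inter> H. w1 h / sum w1 H) \<le> (\<Sum>h\<in>E \<inter> H. exp (2*a) * (w2 h / sum w2 H))"
  proof (rule sum_mono)
    fix h assume h: "h \<in> E \<inter> H"
    have "w1 h / sum w1 H = w1 h * (1 / sum w1 H)" by simp
    also have "\<dots> \<le> (exp a * w2 h) * (exp a / sum w2 H)"
      using h le1[of h] Z' assms(3)[of h] p1 by (intro mult_mono) auto
    also have "\<dots> = exp (2*a) * (w2 h / sum w2 H)"
      by (simp add: mult_exp_exp)
    finally show "w1 h / sum w1 H \<le> exp (2*a) * (w2 h / sum w2 H)" .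
  qed
  then show ?thesis
    using prob_wpmf[OF assms(1-3)] prob_wpmf[OF assms(1,2,4)]
    by (simp add: sum_distrib_left)
qed

lemma gibbs_wpmf:
  assumes "finite H" "h0 \<in> H" "\<beta> > 0"
  shows "(\<Sum>h\<in>H. exp (-\<beta> * L h) / (\<Sum>g\<in>H. exp (-\<beta> * L g)) * L h)
          \<le> L h0 + ln (real (card H)) / \<beta>"
proof -
  define Z where "Z = (\<Sum>g\<in>H. exp (-\<beta> * L g))"
  define p where "p h = exp (-\<beta> * L h) / Z" for h
  have HN: "H \<noteq> {}" using assms by auto
  have Zpos: "Z > 0" unfolding Z_def using assms HN by (simp add: sum_pos)
  have ppos: "p h > 0" for h unfolding p_def using Zpos by simp
  have pne: "p h \<noteq> 0" for h using ppos[of h] by simp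
  have psum: "(\<Sum>h\<in>H. p h) = 1" unfolding p_def using Zpos
    by (simp add: sum_divide_distrib[symmetric] Z_def)
  have Zge: "exp (-\<beta> * L h0) \<le> Z" unfolding Z_def
    using assms by (intro member_le_sum) auto
  have lnZ: "-\<beta> * L h0 \<le> ln Z" using Zge Zpos
    by (metis exp_le_cancel_iff exp_ln)
  have lnp: "ln (p h) = -\<beta> * L h - ln Z" for h
    unfolding p_def using Zpos by (simp add: ln_div)
  have Lh: "L h = (- ln (p h) - ln Z) / \<beta>" for h
    using lnp[of h] assms(3) by (simp add: field_simps)
  define N where "N = real (card H)"
  have cpos: "card H > 0" using HN assms(1) by (simp add: card_gt_0_iff)
  then have Npos: "N > 0" unfolding N_def by simp
  have ent: "(\<Sum>h\<in>H. p h * (- ln (p h))) \<le> ln N"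
  proof -
    have "(\<Sum>h\<in>H. p h * ln (1 / (N * p h))) \<le> (\<Sum>h\<in>H. p h * (1 / (N * p h) - 1))"
      using ppos Npos by (intro sum_mono mult_left_mono ln_le_minus_one) (auto intro: less_imp_le)
    also have "\<dots> = (\<Sum>h\<in>H. 1 / N - p h)"
      using ppos Npos pne by (intro sum.cong) (auto simp: field_simps)
    also have "\<dots> = 0" using psum cpos by (simp add: sum_subtractf N_def)
    finally have A: "(\<Sum>h\<in>H. p h * ln (1 / (N * p h))) \<le> 0" .
    have "(\<Sum>h\<in>H. p h * ln (1 / (N * p h))) = (\<Sum>h\<in>H. p h * (- ln (p h)) - p h * ln N)"
      using ppos Npos pne by (intro sum.cong) (auto simp: ln_div ln_mult algebra_simps)
    also have "\<dots> = (\<Sum>h\<in>H. p h * (- ln (p h))) - ln N"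
      using psum by (simp add: sum_subtractf sum_distrib_right[symmetric])
    finally show ?thesis using A by simp
  qed
  have "(\<Sum>h\<in>H. p h * L h) = (\<Sum>h\<in>H. p h * (- ln (p h)) / \<beta> - p h * ln Z / \<beta>)"
    by (intro sum.cong refl) (simp add: Lh[of] field_simps diff_divide_distrib)
  also have "\<dots> = (\<Sum>h\<in>H. p h * (- ln (p h))) / \<beta> - ln Z / \<beta>"
    using psum by (simp only: sum_subtractf sum_divide_distrib[symmetric] sum_distrib_right[symmetric])
  also have "\<dots> \<le> ln N / \<beta> + L h0"
  proof -
    have "(\<Sum>h\<in>H. p h * (- ln (p h))) / \<beta> \<le> ln N / \<beta>"
      using ent assms(3) by (simp add: divide_right_mono)
    moreover have "- ln Z / \<beta> \<le> L h0" using lnZ assms(3) by (simp add: field_simps)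
    ultimately show ?thesis by simp
  qed
  finally show ?thesis unfolding p_def Z_def N_def by simp
qed


definition phi :: "real \<Rightarrow> real \<Rightarrow> nat \<Rightarrow> real \<Rightarrow> real" where
  "phi g g' d t = min 1 (max 0 ((g * real d - t) / ((g - g') * real d)))"

definition sl :: "real \<Rightarrow> real \<Rightarrow> nat \<Rightarrow> hypothesis \<Rightarrow> example \<Rightarrow> real" where
  "sl g g' d h e = Max (insert 0 ((\<lambda>x'. phi g g' d (real (hamming x' (fst e)))) `
      {x' \<in> cube d. h x' \<noteq> snd e}))"

definition LS :: "real \<Rightarrow> real \<Rightarrow> nat \<Rightarrow> hypothesis \<Rightarrow> example list \<Rightarrow> real" where
  "LS g g' d h S = (\<Sum>j<length S. sl g g' d h (S ! j))"

lemma finite_cube: "finite (cube d)"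
proof -
  have "cube d = {xs. set xs \<subseteq> (UNIV::bool set) \<and> length xs = d}" by (auto simp: cube_def)
  then show ?thesis using finite_lists_length_eq[of "UNIV::bool set" d] by simp
qed

lemma hamming_sym: "length x = length y \<Longrightarrow> hamming x y = hamming y x"
  unfolding hamming_def by (metis)

lemma hamming_tri:
  assumes "length x = length y" "length y = length z"
  shows "hamming x z \<le> hamming x y + hamming y z"
proof -
  have "{i. i < length x \<and> x ! i \<noteq> z ! i} \<subseteq>
        {i. i < length x \<and> x ! i \<noteq> y ! i} \<union> {i. i < length y \<and> y ! i \<noteq> z ! i}"
    using assms by auto
  then have "card {i. i < length x \<and> x ! i \<noteq> z ! i} \<le>
        card ({i. i < length x \<and> x ! i \<noteq> y ! i} \<union> {i. i < length y \<and> y ! i \<noteq> z ! i})"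
    by (intro card_mono) auto
  also have "\<dots> \<le> card {i. i < length x \<and> x ! i \<noteq> y ! i} + card {i. i < length y \<and> y ! i \<noteq> z ! i}"
    by (rule card_Un_le)
  finally show ?thesis unfolding hamming_def .
qed

context
  fixes g g' :: real and d :: nat
  assumes gg: "0 < g'" "g' < g" and d1: "d \<ge> 1"
begin

lemma kpos: "(g - g') * real d > 0" using gg d1 by simp

lemma mm_mono: "(u::real) \<le> v \<Longrightarrow> min 1 (max 0 u) \<le> min 1 (max 0 v)"
  by (simp add: min_def max_def)

lemma mm_step: "(a::real) \<ge> 0 \<Longrightarrow> min 1 (max 0 u) - a \<le> min 1 (max 0 (u - a))"
  by (simp add: min_def max_def)

lemma phi_anti: "s \<le> t \<Longrightarrow> phi g g' d t \<le> phi g g' d s"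
  unfolding phi_def using kpos by (intro mm_mono divide_right_mono) auto

lemma phi_step: "phi g g' d t - 1 / ((g - g') * real d) \<le> phi g g' d (t + 1)"
proof -
  define k where "k = (g - g') * real d"
  have "(g * real d - (t + 1)) / k = (g * real d - t) / k - 1 / k"
    by (simp add: diff_divide_distrib add_divide_distrib)
  moreover have "1 / k \<ge> 0" using kpos unfolding k_def by simp
  ultimately show ?thesis unfolding phi_def k_def[symmetric] using mm_step[of "1/k" "(g * real d - t) / k"] by simp
qed

lemma phi_le1: "phi g g' d t \<le> 1" unfolding phi_def by simp
lemma phi_ge0: "0 \<le> phi g g' d t" unfolding phi_def by simp

lemma fin_set[simp]: "finite (f ` {x' \<in> cube d. P x'})"
  using finite_cube by simp

lemma sl_ge0: "0 \<le> sl g g' d h e"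
  unfolding sl_def using fin_set by simp

lemma sl_le1: "sl g g' d h e \<le> 1"
  unfolding sl_def using fin_set phi_le1 by (simp add: Max_le_iff)

lemma sl_ge_err: "robust_err g' d h e \<Longrightarrow> 1 \<le> sl g g' d h e"
proof -
  assume "robust_err g' d h e"
  then obtain x' where x': "x' \<in> cube d" "h x' \<noteq> snd e" "real (hamming x' (fst e)) \<le> g' * real d"
    unfolding robust_err_def by auto
  have "(g * real d - g' * real d) / ((g - g') * real d) = 1"
    using kpos gg d1 by (simp add: left_diff_distrib[symmetric])
  moreover have "(g * real d - g' * real d) / ((g - g') * real d) \<le>
      (g * real d - real (hamming x' (fst e))) / ((g - g') * real d)"
    using kpos x'(3) by (intro divide_right_mono) auto
  ultimately have "phi g g' d (real (hamming x' (fst e))) = 1"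
    unfolding phi_def by (simp add: min_def max_def)
  moreover have "phi g g' d (real (hamming x' (fst e))) \<le> sl g g' d h e"
    unfolding sl_def using fin_set x' by (intro Max_ge) auto
  ultimately show ?thesis by simp
qed

lemma sl_le_err: "sl g g' d h e \<le> (if robust_err g d h e then 1 else 0)"
proof (cases "robust_err g d h e")
  case True then show ?thesis using sl_le1 by simp
next
  case False
  have "phi g g' d (real (hamming x' (fst e))) \<le> 0" if "x' \<in> cube d" "h x' \<noteq> snd e" for x'
  proof -
    have "real (hamming x' (fst e)) > g * real d" using False that unfolding robust_err_def by auto
    then have "(g * real d - real (hamming x' (fst e))) / ((g - g') * real d) \<le> 0"
      using kpos by (intro divide_nonpos_pos) auto
    then show ?thesis unfolding phi_def by (simp add: min_def max_def)
  qed
  then show ?thesis unfolding sl_def using fin_set False by (auto simp: Max_le_iff)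
qed

lemma sl_lip:
  assumes "fst e1 \<in> cube d" "fst e2 \<in> cube d" "snd e1 = snd e2" "hamming (fst e1) (fst e2) = 1"
  shows "sl g g' d h e1 \<le> sl g g' d h e2 + 1 / ((g - g') * real d)"
proof -
  have c: "1 / ((g - g') * real d) > 0" using kpos by simp
  have "a \<le> sl g g' d h e2 + 1 / ((g - g') * real d)"
    if "a \<in> insert 0 ((\<lambda>x'. phi g g' d (real (hamming x' (fst e1)))) ` {x' \<in> cube d. h x' \<noteq> snd e1})" for a
  proof -
    from that consider "a = 0" | x' where "x' \<in> cube d" "h x' \<noteq> snd e1" "a = phi g g' d (real (hamming x' (fst e1)))"
      by auto
    then show ?thesis
    proof cases
      case 1 then show ?thesis using sl_ge0[of h e2] c by simp
    next
      case 2
      have "hamming x' (fst e2) \<le> hamming x' (fst e1) + hamming (fst e1) (fst e2)"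
        using assms 2 by (intro hamming_tri) (auto simp: cube_def)
      then have "real (hamming x' (fst e2)) \<le> real (hamming x' (fst e1)) + 1" using assms by simp
      then have "phi g g' d (real (hamming x' (fst e1)) + 1) \<le> phi g g' d (real (hamming x' (fst e2)))"
        by (rule phi_anti)
      moreover have "phi g g' d (real (hamming x' (fst e2))) \<le> sl g g' d h e2"
        unfolding sl_def using fin_set 2 assms(3) by (intro Max_ge) auto
      ultimately show ?thesis using phi_step[of "real (hamming x' (fst e1))"] 2 by linarith
    qed
  qed
  then show ?thesis unfolding sl_def[of _ _ _ _ e1] using fin_set by (subst Max_le_iff) auto
qed

lemma LS_sens:
  assumes "sample_neighbors d S S'"
  shows "LS g g' d h S \<le> LS g g' d h S' + 1 / ((g - g') * real d)"
proof -
  from assms obtain i where i: "i < length S" "snd (S ! i) = snd (S' ! i)"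
      "hamming (fst (S ! i)) (fst (S' ! i)) = 1" "\<forall>j < length S. j \<noteq> i \<longrightarrow> S ! j = S' ! j"
    and v: "valid_dataset d S" "valid_dataset d S'" and len: "length S = length S'"
    unfolding sample_neighbors_def by blast
  have c1: "fst (S ! i) \<in> cube d" using v i len unfolding valid_dataset_def by auto
  have c2: "fst (S' ! i) \<in> cube d" using v i len unfolding valid_dataset_def by auto
  have "LS g g' d h S = sl g g' d h (S ! i) + (\<Sum>j\<in>{..<length S} - {i}. sl g g' d h (S ! j))"
    unfolding LS_def using i by (subst sum.remove[of _ i]) auto
  also have "(\<Sum>j\<in>{..<length S} - {i}. sl g g' d h (S ! j)) = (\<Sum>j\<in>{..<length S} - {i}. sl g g' d h (S' ! j))"
    using i by (intro sum.cong) auto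
  also have "sl g g' d h (S ! i) \<le> sl g g' d h (S' ! i) + 1 / ((g - g') * real d)"
    using c1 c2 i by (intro sl_lip) auto
  also have "LS g g' d h S' = sl g g' d h (S' ! i) + (\<Sum>j\<in>{..<length S} - {i}. sl g g' d h (S' ! j))"
    unfolding LS_def using i len by (subst sum.remove[of _ i]) auto
  ultimately show ?thesis by linarith
qed

lemma len_filter_sum: "real (length (filter P S)) = (\<Sum>j<length S. if P (S ! j) then 1 else 0)"
proof -
  have "real (length (filter P S)) = real (card {j \<in> {..<length S}. P (S ! j)})"
    by (simp add: length_filter_conv_card conj_commute lessThan_def Collect_conj_eq[symmetric])
  also have "\<dots> = (\<Sum>j\<in>{j \<in> {..<length S}. P (S ! j)}. 1)" by simp
  also have "\<dots> = (\<Sum>j<length S. if P (S ! j) then 1 else 0)"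
    by (subst sum.inter_filter) auto
  finally show ?thesis .
qed

lemma LS_lower: "real (length S) * emp_robust_risk g' d h S \<le> LS g g' d h S"
proof (cases "S = []")
  case True then show ?thesis by (simp add: LS_def)
next
  case False
  have "real (length S) * emp_robust_risk g' d h S = real (length (filter (robust_err g' d h) S))"
    using False unfolding emp_robust_risk_def by simp
  also have "\<dots> \<le> LS g g' d h S" unfolding len_filter_sum LS_def
    using sl_ge_err sl_ge0 by (intro sum_mono) (auto intro: order.trans[OF _ sl_ge0])
  finally show ?thesis .
qed

lemma LS_upper: "LS g g' d h S \<le> real (length S) * emp_robust_risk g d h S"
proof (cases "S = []")
  case True then show ?thesis by (simp add: LS_def)
next
  case False
  have "LS g g' d h S \<le> real (length (filter (robust_err g d h) S))" unfolding len_filter_sum LS_def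
    using sl_le_err by (intro sum_mono) auto
  also have "\<dots> = real (length S) * emp_robust_risk g d h S"
    using False unfolding emp_robust_risk_def by simp
  finally show ?thesis .
qed

end

lemma neighbors_sym: "sample_neighbors d S S' \<Longrightarrow> sample_neighbors d S' S"
proof -
  assume a: "sample_neighbors d S S'"
  then obtain i where i: "i < length S" "snd (S ! i) = snd (S' ! i)"
      "hamming (fst (S ! i)) (fst (S' ! i)) = 1" "\<forall>j < length S. j \<noteq> i \<longrightarrow> S ! j = S' ! j"
    and v: "valid_dataset d S" "valid_dataset d S'" and len: "length S = length S'"
    unfolding sample_neighbors_def by blast
  have c1: "fst (S ! i) \<in> cube d" using v i len unfolding valid_dataset_def by auto
  have c2: "fst (S' ! i) \<in> cube d" using v i len unfolding valid_dataset_def by auto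
  have "hamming (fst (S' ! i)) (fst (S ! i)) = 1"
    using i(3) c1 c2 hamming_sym[of "fst (S ! i)" "fst (S' ! i)"] by (simp add: cube_def)
  then show ?thesis unfolding sample_neighbors_def using i v len by (metis)
qed

theorem lemma6p4:
  shows "\<exists>C::real. C > 0 \<and>
    (\<forall>(\<gamma>'::real) (\<gamma>::real) (\<epsilon>::real) (d::nat) (H::hypothesis set).
       0 < \<gamma>' \<and> \<gamma>' < \<gamma> \<and> 0 < \<epsilon> \<and> d \<ge> 1 \<and>
       finite H \<and> H \<noteq> {} \<and> H \<subseteq> (cube d \<rightarrow>\<^sub>E (UNIV :: bool set)) \<longrightarrow>
       (\<exists>M :: example list \<Rightarrow> hypothesis pmf.
          sample_nabla0_DP \<epsilon> d M \<and>
          (\<forall>S. set_pmf (M S) \<subseteq> H) \<and>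
          (\<forall>S. valid_dataset d S \<and> S \<noteq> [] \<longrightarrow>
             measure_pmf.expectation (M S) (\<lambda>h. emp_robust_risk \<gamma>' d h S)
               \<le> (INF h\<in>H. emp_robust_risk \<gamma> d h S)
                  + C * ln (real (card H))
                      / (\<epsilon> * (\<gamma> - \<gamma>') * real d * real (length S)))))"
proof (intro exI[of _ 2] conjI allI impI)
  fix g' g \<epsilon> :: real and d :: nat and H :: "hypothesis set"
  assume as: "0 < g' \<and> g' < g \<and> 0 < \<epsilon> \<and> d \<ge> 1 \<and>
       finite H \<and> H \<noteq> {} \<and> H \<subseteq> (cube d \<rightarrow>\<^sub>E (UNIV :: bool set))"
  then have gg: "0 < g'" "g' < g" and ep: "0 < \<epsilon>" and d1: "d \<ge> 1"
    and fH: "finite H" and nH: "H \<noteq> {}" by auto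
  define \<beta> where "\<beta> = \<epsilon> * (g - g') * real d / 2"
  have kp: "(g - g') * real d > 0" using kpos[OF gg d1] .
  have bpos: "\<beta> > 0" unfolding \<beta>_def using mult_pos_pos[OF ep kp] by (simp add: mult.assoc)
  have bc: "\<beta> * (1 / ((g - g') * real d)) = \<epsilon> / 2" unfolding \<beta>_def using kp gg d1 by simp
  define w where "w S h = exp (- \<beta> * LS g g' d h S)" for S h
  define M where "M S = wpmf H (w S)" for S
  have wpos: "\<And>h. h \<in> H \<Longrightarrow> w S h > 0" for S unfolding w_def by simp
  show "\<exists>M :: example list \<Rightarrow> hypothesis pmf.
          sample_nabla0_DP \<epsilon> d M \<and>
          (\<forall>S. set_pmf (M S) \<subseteq> H) \<and>
          (\<forall>S. valid_dataset d S \<and> S \<noteq> [] \<longrightarrow>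
             measure_pmf.expectation (M S) (\<lambda>h. emp_robust_risk g' d h S)
               \<le> (INF h\<in>H. emp_robust_risk g d h S)
                  + 2 * ln (real (card H))
                      / (\<epsilon> * (g - g') * real d * real (length S)))"
  proof (intro exI[of _ M] conjI allI impI)
    show "sample_nabla0_DP \<epsilon> d M" unfolding sample_nabla0_DP_def
    proof (intro allI impI)
      fix S S' E assume nb: "sample_neighbors d S S'"
      have wle: "w S1 h \<le> exp (\<epsilon> / 2) * w S2 h" if "sample_neighbors d S2 S1" for S1 S2 h
      proof -
        have "LS g g' d h S2 \<le> LS g g' d h S1 + 1 / ((g - g') * real d)"
          using LS_sens[OF gg d1 that] .
        then have "\<beta> * LS g g' d h S2 \<le> \<beta> * LS g g' d h S1 + \<epsilon> / 2"
          using bpos bc by (metis distrib_left mult_left_mono less_imp_le)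
        then have "- \<beta> * LS g g' d h S1 \<le> \<epsilon> / 2 + - \<beta> * LS g g' d h S2" by simp
        then have "exp (- \<beta> * LS g g' d h S1) \<le> exp (\<epsilon> / 2 + - \<beta> * LS g g' d h S2)" by simp
        then show ?thesis unfolding w_def by (metis exp_add)
      qed
      have "measure_pmf.prob (M S) E \<le> exp (2 * (\<epsilon>/2)) * measure_pmf.prob (M S') E"
        unfolding M_def
        by (rule dp_wpmf[OF fH nH wpos wpos]) (auto intro: wle nb neighbors_sym[OF nb])
      then show "measure_pmf.prob (M S) E \<le> exp \<epsilon> * measure_pmf.prob (M S') E" by simp
    qed
  next
    fix S show "set_pmf (M S) \<subseteq> H" unfolding M_def by (rule set_wpmf[of H "w S", OF fH nH wpos])
  next
    fix S assume vS: "valid_dataset d S \<and> S \<noteq> []"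
    define n where "n = real (length S)"
    have npos: "n > 0" using vS unfolding n_def by simp
    have wS: "\<And>h. h \<in> H \<Longrightarrow> w S h > 0" unfolding w_def by simp
    define Z where "Z = (\<Sum>g\<in>H. w S g)"
    let ?L = "\<lambda>h. LS g g' d h S"
    define B where "B = 2 * ln (real (card H)) / (\<epsilon> * (g - g') * real d * n)"
    have BB: "ln (real (card H)) / \<beta> / n = B" unfolding B_def \<beta>_def by (simp add: field_simps)
    have E: "measure_pmf.expectation (M S) (\<lambda>h. emp_robust_risk g' d h S)
        = (\<Sum>h\<in>H. emp_robust_risk g' d h S * pmf (M S) h)"
      using set_wpmf[of H "w S", OF fH nH wS] unfolding M_def
      by (intro integral_measure_pmf_real[OF fH]) auto
    also have "\<dots> \<le> (\<Sum>h\<in>H. w S h / Z * (?L h / n))"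
    proof (rule sum_mono)
      fix h assume h: "h \<in> H"
      have "emp_robust_risk g' d h S \<le> ?L h / n"
        using LS_lower[OF gg d1, of S h] npos unfolding n_def by (simp add: field_simps)
      moreover have "pmf (M S) h = w S h / Z" unfolding M_def Z_def using pmf_wpmf[of H "w S", OF fH nH wS] h by simp
      moreover have "w S h / Z \<ge> 0" unfolding Z_def using wS fH h by (intro divide_nonneg_nonneg sum_nonneg) (auto intro: less_imp_le)
      ultimately show "emp_robust_risk g' d h S * pmf (M S) h \<le> w S h / Z * (?L h / n)"
        by (metis mult.commute mult_left_mono)
    qed
    also have "\<dots> = (\<Sum>h\<in>H. w S h / Z * ?L h) / n"
      by (simp add: sum_divide_distrib)
    finally have E1: "measure_pmf.expectation (M S) (\<lambda>h. emp_robust_risk g' d h S) \<le> (\<Sum>h\<in>H. w S h / Z * ?L h) / n" .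
    have "measure_pmf.expectation (M S) (\<lambda>h. emp_robust_risk g' d h S) - B \<le> emp_robust_risk g d h0 S"
      if h0: "h0 \<in> H" for h0
    proof -
      have "(\<Sum>h\<in>H. w S h / Z * ?L h) \<le> ?L h0 + ln (real (card H)) / \<beta>"
        unfolding w_def Z_def by (rule gibbs_wpmf[OF fH h0 bpos])
      then have "(\<Sum>h\<in>H. w S h / Z * ?L h) / n \<le> (?L h0 + ln (real (card H)) / \<beta>) / n"
        using npos by (simp add: divide_right_mono)
      also have "\<dots> = ?L h0 / n + B" using BB by (simp add: add_divide_distrib)
      also have "?L h0 / n \<le> emp_robust_risk g d h0 S"
        using LS_upper[OF gg d1, of h0 S] npos unfolding n_def by (simp add: field_simps)
      finally show ?thesis using E1 by linarith
    qed
    then have "measure_pmf.expectation (M S) (\<lambda>h. emp_robust_risk g' d h S) - B \<le> (INF h\<in>H. emp_robust_risk g d h S)"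
      using nH by (intro cINF_greatest) auto
    then show "measure_pmf.expectation (M S) (\<lambda>h. emp_robust_risk g' d h S)
               \<le> (INF h\<in>H. emp_robust_risk g d h S)
                  + 2 * ln (real (card H)) / (\<epsilon> * (g - g') * real d * real (length S))"
      unfolding B_def n_def by simp
  qed
qed simp

end
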